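(* Fix integers $j,k$ with $0\le j\le k-1$. Expand the polynomial $(2m+1)(2m+3)\cdots(2m+2k-1)$ in the variable $m$ in the basis $1,\ m,\ m(m-1),\ \dots,\ m(m-1)\cdots(m-k+1)$, and let $C^N_k$ denote the coefficient of $m(m-1)\cdots(m-N+1)$ ($0\le N\le k$). Then $$\sum_{N=j}^{k}(-1)^N C^N_k\,\frac{(2N)!}{(N-j)!\,2^{2N}}=0.$$ *)

theory Defs
  imports Complex_Main
begin

definition falling :: "nat \<Rightarrow> real \<Rightarrow> real" where
  "falling N m = (\<Prod>i<N. (m - real i))"

definition C :: "nat \<Rightarrow> nat \<Rightarrow> real" where
  "C k N = (THE c :: nat \<Rightarrow> real. (\<forall>n>k. c n = 0) \<and>
      (\<forall>m::real. (\<Prod>i=1..k. 2*m + 2*real i - 1) = (\<Sum>n\<le>k. c n * falling n m))) N"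

end

theory Submission
  imports Defs
begin

lemma falling_Suc: "falling (Suc n) x = falling n x * (x - real n)"
  by (simp add: falling_def)

lemma falling_Suc_shift: "falling (Suc n) (x+1) = (x+1) * falling n x"
  unfolding falling_def by (subst prod.lessThan_Suc_shift) (simp add: algebra_simps)

lemma falling_diff: "falling m (x+1) - falling m x = real m * falling (m-1) x"
proof (cases m)
  case 0 then show ?thesis by (simp add: falling_def)
next
  case (Suc n) then show ?thesis unfolding Suc
    by (subst falling_Suc_shift, subst falling_Suc) (simp add: algebra_simps)
qed

lemma falling_nat_zero: "N < n \<Longrightarrow> falling n (real N) = 0"
  unfolding falling_def by (rule prod_zero) auto

lemma falling_add: "falling (j + r) x = falling j x * falling r (x - real j)"
  by (induction r) (simp_all add: falling_Suc falling_def algebra_simps)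

lemma falling_fact: "falling n (real n) = fact n"
proof (induction n)
  case 0 then show ?case by (simp add: falling_def)
next
  case (Suc n)
  have "falling (Suc n) (real (Suc n)) = falling (Suc n) (real n + 1)" by (metis add.commute of_nat_Suc)
  also have "\<dots> = (real n + 1) * fact n" using Suc by (simp add: falling_Suc_shift)
  finally show ?case by (simp add: algebra_simps)
qed

lemma falling_fact_div: "j \<le> N \<Longrightarrow> fact N / fact (N-j) = falling j (real N)"
proof -
  assume a: "j \<le> N"
  have "falling N (real N) = falling j (real N) * falling (N-j) (real N - real j)"
    using falling_add[of j "N-j" "real N"] a by simp
  also have "real N - real j = real (N-j)" using a by simp
  finally have "fact N = falling j (real N) * fact (N-j)" by (simp add: falling_fact)
  then show ?thesis by simp
qed

lemma fact_half: "(-1)^N * fact (2*N) / 2^(2*N) = fact N * falling N (-1/2::real)"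
proof (induction N)
  case 0 then show ?case by (simp add: falling_def)
next
  case (Suc N)
  have e: "fact (2 * Suc N) = fact (2*N) * (2*real N + 1) * (2 * real N + 2)"
    by (simp add: algebra_simps)
  have "(-1)^(Suc N) * fact (2*Suc N) / 2^(2*Suc N) =
     ((-1)^N * fact (2*N) / 2^(2*N)) * (-(2*real N + 1) * (2 * real N + 2) / 4)"
    by (simp add: e field_simps)
  also have "\<dots> = fact N * falling N (-1/2::real) * (-(2*real N + 1) * (2 * real N + 2) / 4)"
    using Suc by simp
  also have "\<dots> = fact (Suc N) * falling (Suc N) (-1/2::real)"
    by (simp add: falling_Suc field_simps)
  finally show ?case .
qed

fun fdiff :: "nat \<Rightarrow> (real \<Rightarrow> real) \<Rightarrow> real \<Rightarrow> real" where
  "fdiff 0 f x = f x"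
| "fdiff (Suc j) f x = fdiff j f (x+1) - fdiff j f x"

lemma fdiff_zero: "(\<forall>i\<le>j. f (x + real i) = 0) \<Longrightarrow> fdiff j f x = 0"
proof (induction j arbitrary: x)
  case 0 then show ?case by simp
next
  case (Suc j)
  have "fdiff j f (x+1) = 0"
  proof (rule Suc.IH, intro allI impI)
    fix i assume "i \<le> j"
    then have "f (x + real (Suc i)) = 0" using Suc.prems by auto
    then show "f (x + 1 + real i) = 0" by (simp add: algebra_simps)
  qed
  moreover have "fdiff j f x = 0" using Suc.prems by (intro Suc.IH) auto
  ultimately show ?case by simp
qed

lemma fdiff_sum: "fdiff j (\<lambda>x. \<Sum>n\<in>A. c n * g n x) x = (\<Sum>n\<in>A. c n * fdiff j (g n) x)"
  by (induction j arbitrary: x) (simp_all add: sum_subtractf right_diff_distrib)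

lemma fdiff_falling: "fdiff j (falling N) x = falling j (real N) * falling (N - j) x"
proof (induction j arbitrary: x)
  case 0 then show ?case by (simp add: falling_def)
next
  case (Suc j)
  have "fdiff (Suc j) (falling N) x = falling j (real N) * (falling (N-j) (x+1) - falling (N-j) x)"
    using Suc by (simp add: algebra_simps)
  also have "\<dots> = falling j (real N) * real (N-j) * falling (N - Suc j) x"
    by (simp add: falling_diff)
  also have "\<dots> = falling (Suc j) (real N) * falling (N - Suc j) x"
  proof (cases "j < N")
    case True then show ?thesis by (simp add: falling_Suc of_nat_diff)
  next
    case False then show ?thesis by (simp add: falling_nat_zero)
  qed
  finally show ?case .
qed

definition PP :: "nat \<Rightarrow> real \<Rightarrow> real" where
  "PP k m = (\<Prod>i=1..k. 2*m + 2*real i - 1)"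

lemma C_exists: "\<exists>c. (\<forall>n>k. c n = 0) \<and> (\<forall>m. PP k m = (\<Sum>n\<le>k. c n * falling n m))"
proof (induction k)
  case 0
  show ?case by (rule exI[of _ "\<lambda>n. if n = 0 then 1 else 0"]) (simp add: PP_def falling_def)
next
  case (Suc k)
  then obtain c where c0: "\<forall>n>k. c n = 0" and cP: "\<forall>m. PP k m = (\<Sum>n\<le>k. c n * falling n m)"
    by blast
  define c' where "c' n = (if n = 0 then 0 else 2 * c (n-1)) + (2*real n + 2*real k + 1) * c n" for n
  show ?case
  proof (rule exI[of _ c'], intro conjI allI impI)
    fix n assume "n > Suc k" then show "c' n = 0" using c0 by (simp add: c'_def)
  next
    fix m
    have "PP (Suc k) m = PP k m * (2*m + 2*real k + 1)"
      by (simp add: PP_def prod.nat_ivl_Suc' algebra_simps)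
    also have "\<dots> = (\<Sum>n\<le>k. c n * falling n m * (2*m + 2*real k + 1))"
      using cP by (simp add: sum_distrib_right)
    also have "\<dots> = (\<Sum>n\<le>k. 2 * c n * falling (Suc n) m +
        (2*real n + 2*real k + 1) * c n * falling n m)"
      by (rule sum.cong[OF refl]) (simp add: falling_Suc algebra_simps)
    also have "\<dots> = (\<Sum>n\<le>k. 2 * c n * falling (Suc n) m) +
        (\<Sum>n\<le>k. (2*real n + 2*real k + 1) * c n * falling n m)"
      by (rule sum.distrib)
    also have "(\<Sum>n\<le>k. (2*real n + 2*real k + 1) * c n * falling n m) =
        (\<Sum>n\<le>Suc k. (2*real n + 2*real k + 1) * c n * falling n m)"
      using c0 by simp
    also have "(\<Sum>n\<le>k. 2 * c n * falling (Suc n) m) =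
        (\<Sum>n\<le>Suc k. (if n = 0 then 0 else 2 * c (n-1)) * falling n m)"
      unfolding sum.atMost_Suc_shift by simp
    also have "(\<Sum>n\<le>Suc k. (if n = 0 then 0 else 2 * c (n-1)) * falling n m) +
        (\<Sum>n\<le>Suc k. (2*real n + 2*real k + 1) * c n * falling n m)
        = (\<Sum>n\<le>Suc k. c' n * falling n m)"
      unfolding sum.distrib[symmetric] c'_def by (rule sum.cong[OF refl]) (simp add: algebra_simps)
    finally show "PP (Suc k) m = (\<Sum>n\<le>Suc k. c' n * falling n m)" .
  qed
qed

lemma C_unique:
  assumes "\<forall>n>k. c n = 0" "\<forall>n>k. d n = 0"
    "\<forall>m. (\<Sum>n\<le>k. c n * falling n m) = (\<Sum>n\<le>k. d n * falling n m)"
  shows "c = d"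
proof -
  define e where "e n = c n - d n" for n
  have e0: "\<forall>n>k. e n = 0" using assms by (simp add: e_def)
  have eS: "\<forall>m. (\<Sum>n\<le>k. e n * falling n m) = 0"
    using assms(3) by (simp add: e_def left_diff_distrib sum_subtractf)
  have "e i = 0" for i
  proof (induction i rule: less_induct)
    case (less i)
    show ?case
    proof (cases "i \<le> k")
      case False then show ?thesis using e0 by simp
    next
      case True
      have "(\<Sum>n\<le>k. e n * falling n (real i)) = e i * falling i (real i)"
      proof -
        have "(\<Sum>n\<le>k. e n * falling n (real i)) = e i * falling i (real i) +
            (\<Sum>n\<in>{..k} - {i}. e n * falling n (real i))"
          using True by (simp add: sum.remove)
        also have "(\<Sum>n\<in>{..k} - {i}. e n * falling n (real i)) = 0"
        proof (rule sum.neutral, intro ballI)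
          fix n assume "n \<in> {..k} - {i}"
          then have "n < i \<or> i < n" by auto
          then show "e n * falling n (real i) = 0"
            using less.IH falling_nat_zero[of i n] by auto
        qed
        finally show ?thesis by simp
      qed
      then have "e i * fact i = 0" using eS falling_fact[of i] by simp
      then show ?thesis by simp
    qed
  qed
  then show ?thesis unfolding e_def by (auto simp: fun_eq_iff)
qed

lemma C_prop: "\<forall>m. PP k m = (\<Sum>n\<le>k. C k n * falling n m)"
proof -
  define Q where "Q = (\<lambda>c :: nat \<Rightarrow> real. (\<forall>n>k. c n = 0) \<and>
      (\<forall>m::real. (\<Prod>i=1..k. 2*m + 2*real i - 1) = (\<Sum>n\<le>k. c n * falling n m)))"
  obtain c where c: "(\<forall>n>k. c n = 0) \<and> (\<forall>m. PP k m = (\<Sum>n\<le>k. c n * falling n m))"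
    using C_exists by blast
  have Qc: "Q c" using c unfolding Q_def PP_def by simp
  have uniq: "d = c" if "Q d" for d
  proof (rule C_unique[of k d c])
    show "\<forall>n>k. d n = 0" using that unfolding Q_def by blast
    show "\<forall>n>k. c n = 0" using c by blast
    show "\<forall>m. (\<Sum>n\<le>k. d n * falling n m) = (\<Sum>n\<le>k. c n * falling n m)"
      using that Qc unfolding Q_def by metis
  qed
  have "C k = (THE c. Q c)" unfolding C_def Q_def by (rule ext) (rule refl)
  also have "(THE c. Q c) = c" using Qc uniq by (rule the_equality)
  finally show ?thesis using c by simp
qed

theorem lemma3p14:
  fixes j k :: nat
  assumes "j \<le> k - 1" and "1 \<le> k"
  shows "(\<Sum>N=j..k. (-1)^N * C k N * fact (2*N) / (fact (N - j) * 2^(2*N))) = (0::real)"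
proof -
  define a where "a = -1/2 - real j"
  have "fdiff j (PP k) a = 0"
  proof (rule fdiff_zero, intro allI impI)
    fix i assume i: "i \<le> j"
    show "PP k (a + real i) = 0"
      unfolding PP_def
    proof (rule prod_zero)
      show "\<exists>l\<in>{1..k}. 2 * (a + real i) + 2 * real l - 1 = 0"
        using i assms by (intro bexI[of _ "j - i + 1"]) (auto simp: a_def of_nat_diff)
    qed simp
  qed
  moreover have "PP k = (\<lambda>m. \<Sum>n\<le>k. C k n * falling n m)"
    using C_prop by auto
  ultimately have "fdiff j (\<lambda>m. \<Sum>n\<le>k. C k n * falling n m) a = 0" by simp
  then have z: "(\<Sum>n\<le>k. C k n * (falling j (real n) * falling (n - j) a)) = 0"
    by (simp add: fdiff_sum fdiff_falling)
  have "(\<Sum>n\<le>k. C k n * (falling j (real n) * falling (n - j) a)) =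
        (\<Sum>n=j..k. C k n * (falling j (real n) * falling (n - j) a))"
    by (rule sum.mono_neutral_right) (auto simp: falling_nat_zero)
  with z have z2: "(\<Sum>n=j..k. C k n * (falling j (real n) * falling (n - j) a)) = 0" by simp
  have "(\<Sum>N=j..k. (-1)^N * C k N * fact (2*N) / (fact (N - j) * 2^(2*N))) =
      (\<Sum>N=j..k. falling j (-1/2) * (C k N * (falling j (real N) * falling (N - j) a)))"
  proof (rule sum.cong[OF refl])
    fix N assume N: "N \<in> {j..k}"
    have f1: "falling N (-1/2::real) = falling j (-1/2) * falling (N-j) a"
      using falling_add[of j "N-j" "-1/2"] N by (simp add: a_def)
    have "(-1)^N * C k N * fact (2*N) / (fact (N - j) * 2^(2*N)) =
        C k N * ((-1)^N * fact (2*N) / 2^(2*N)) / fact (N-j)" by (simp add: mult.commute mult.left_commute)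
    also have "\<dots> = C k N * (fact N / fact (N-j)) * falling N (-1/2::real)"
      by (simp add: fact_half)
    also have "\<dots> = falling j (-1/2) * (C k N * (falling j (real N) * falling (N - j) a))"
      using N f1 by (simp add: falling_fact_div)
    finally show "(-1)^N * C k N * fact (2*N) / (fact (N - j) * 2^(2*N)) =
        falling j (-1/2) * (C k N * (falling j (real N) * falling (N - j) a))" .
  qed
  also have "\<dots> = 0" by (simp add: sum_distrib_left[symmetric] z2)
  finally show ?thesis .
qed

end
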